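(* Let $N\ge4$, $\Lambda^2=(-1,1)^2$, and let $\mathcal F$ be a diffeomorphism from $[-1,1]^2$ onto $\overline\Omega$, $\Omega=\mathcal F(\Lambda^2)$. For $m,n\ge1$ define $$\boldsymbol\chi_{m,n}(\boldsymbol\xi)=\big(\varphi_{m+3}(\xi_1)\psi_{n+2}(\xi_2),\,-\psi_{m+2}(\xi_1)\varphi_{n+3}(\xi_2)\big)^{\intercal},\qquad \tilde{\boldsymbol\chi}_{m,n}=\mathcal F^{\rm div}[\boldsymbol\chi_{m,n}].$$ Then $\boldsymbol H^1_{N,0}(\mathrm{div}0;\Omega):=\mathrm{span}\{\tilde{\boldsymbol\chi}_{m,n}:1\le m,n\le N-3\}$ is a conforming divergence-free approximation space for $\boldsymbol H^1_0(\mathrm{div}0;\Omega)$; in particular $\nabla_{\boldsymbol x}\cdot\tilde{\boldsymbol\chi}_{m,n}=0$ in $\Omega$ for all $1\le m,n\le N-3$.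
   Context: $P_n^{(\alpha,\beta)}$ is the classical Jacobi polynomial; generalized Jacobi polynomials: $P_n^{(-1,-1)}(\xi)=\frac{\xi^2-1}{4}P_{n-2}^{(1,1)}(\xi)$ ($n\ge2$), $P_n^{(-2,-2)}(\xi)=\big(\frac{\xi^2-1}{4}\big)^2P_{n-4}^{(2,2)}(\xi)$ ($n\ge4$). $\psi_m(\xi)=\frac{\sqrt{2(2m-1)}}{m-1}P_m^{(-1,-1)}(\xi)$ ($m\ge2$), $\varphi_m(\xi)=\frac{\sqrt{8(2m-3)}}{(m-3)(m-2)}P_m^{(-2,-2)}(\xi)$ ($m\ge4$). Contravariant Piola transformation: $\mathcal F^{\rm div}[\boldsymbol\Phi](\boldsymbol x)=\frac{\partial_{\boldsymbol\xi}\boldsymbol x}{\det(\partial_{\boldsymbol\xi}\boldsymbol x)}\boldsymbol\Phi(\mathcal F^{-1}(\boldsymbol x))$ with $\partial_{\boldsymbol\xi}\boldsymbol x$ the Jacobian of $\mathcal F$. $\boldsymbol H^1_0(\mathrm{div}0;\Omega)=\{\boldsymbol v\in H^1_0(\Omega)^2:\nabla\cdot\boldsymbol v=0\}$. *)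

theory Defs
  imports "HOL-Analysis.Analysis"
begin

text \<open>Classical Jacobi polynomial P_n^(a,b) for nonnegative integer parameters,
  explicit formula (DLMF 18.5.8).\<close>
definition jacobiP :: "nat \<Rightarrow> nat \<Rightarrow> nat \<Rightarrow> real \<Rightarrow> real" where
  "jacobiP a b n x = (\<Sum>s=0..n. real ((n + a) choose (n - s)) * real ((n + b) choose s)
       * ((x - 1) / 2) ^ s * ((x + 1) / 2) ^ (n - s))"

text \<open>Generalized Jacobi polynomials P_n^(-1,-1) (n>=2) and P_n^(-2,-2) (n>=4).\<close>
definition jacobiP_m1 :: "nat \<Rightarrow> real \<Rightarrow> real" where
  "jacobiP_m1 n x = (x^2 - 1) / 4 * jacobiP 1 1 (n - 2) x"

definition jacobiP_m2 :: "nat \<Rightarrow> real \<Rightarrow> real" where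
  "jacobiP_m2 n x = ((x^2 - 1) / 4)^2 * jacobiP 2 2 (n - 4) x"

definition psi_basis :: "nat \<Rightarrow> real \<Rightarrow> real" where
  "psi_basis m x = sqrt (2 * (2 * real m - 1)) / (real m - 1) * jacobiP_m1 m x"

definition phi_basis :: "nat \<Rightarrow> real \<Rightarrow> real" where
  "phi_basis m x = sqrt (8 * (2 * real m - 3)) / ((real m - 3) * (real m - 2)) * jacobiP_m2 m x"

definition Lambda2 :: "(real^2) set" where
  "Lambda2 = {\<xi>. \<forall>i. \<bar>\<xi> $ i\<bar> < 1}"

definition Lambda2_closed :: "(real^2) set" where
  "Lambda2_closed = {\<xi>. \<forall>i. \<bar>\<xi> $ i\<bar> \<le> 1}"

definition chi :: "nat \<Rightarrow> nat \<Rightarrow> real^2 \<Rightarrow> real^2" where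
  "chi m n \<xi> = vector [ phi_basis (m + 3) (\<xi> $ 1) * psi_basis (n + 2) (\<xi> $ 2),
                        - psi_basis (m + 2) (\<xi> $ 1) * phi_basis (n + 3) (\<xi> $ 2) ]"

definition pdiff :: "2 \<Rightarrow> (real^2 \<Rightarrow> real) \<Rightarrow> real^2 \<Rightarrow> real" where
  "pdiff i g x = frechet_derivative g (at x) (axis i 1)"

fun iter_pdiff :: "2 list \<Rightarrow> (real^2 \<Rightarrow> real) \<Rightarrow> real^2 \<Rightarrow> real" where
  "iter_pdiff [] g = g"
| "iter_pdiff (i # is) g = pdiff i (iter_pdiff is g)"

definition smooth_on :: "(real^2) set \<Rightarrow> (real^2 \<Rightarrow> real^2) \<Rightarrow> bool" where
  "smooth_on U F = (\<forall>k is. \<forall>x\<in>U. (iter_pdiff is (\<lambda>y. F y $ k)) differentiable (at x))"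

definition diffeo_square :: "(real^2 \<Rightarrow> real^2) \<Rightarrow> bool" where
  "diffeo_square F = ((\<exists>U. open U \<and> Lambda2_closed \<subseteq> U \<and> smooth_on U F)
      \<and> inj_on F Lambda2_closed
      \<and> (\<forall>\<xi>\<in>Lambda2_closed. det (matrix (frechet_derivative F (at \<xi>))) \<noteq> 0))"

definition jac :: "(real^2 \<Rightarrow> real^2) \<Rightarrow> real^2 \<Rightarrow> real^2^2" where
  "jac F \<xi> = matrix (frechet_derivative F (at \<xi>))"

definition piola_div :: "(real^2 \<Rightarrow> real^2) \<Rightarrow> (real^2 \<Rightarrow> real^2) \<Rightarrow> real^2 \<Rightarrow> real^2" where
  "piola_div F \<Phi> x = (let \<xi> = inv_into Lambda2_closed F x in
       (1 / det (jac F \<xi>)) *\<^sub>R (jac F \<xi> *v \<Phi> \<xi>))"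

definition divergence :: "(real^2 \<Rightarrow> real^2) \<Rightarrow> real^2 \<Rightarrow> real" where
  "divergence v x = (\<Sum>i\<in>UNIV. frechet_derivative v (at x) (axis i 1) $ i)"

end

theory Submission
  imports Defs "HOL-Computational_Algebra.Polynomial"
begin

lemma binom_id1: "Suc (Suc (Suc s)) * (K choose Suc (Suc (Suc s))) = (K - Suc (Suc s)) * (K choose Suc (Suc s))"
proof -
  have "Suc (Suc (Suc s)) * (K choose Suc (Suc (Suc s))) = K * ((K-1) choose Suc (Suc s))"
    by (rule binomial_absorption)
  also have "\<dots> = (K - Suc (Suc s)) * (K choose Suc (Suc s))"
    using binomial_absorb_comp[of K "Suc (Suc s)"] by simp
  finally show ?thesis .
qed

lemma binom_id2: "(K - s) * (K choose s) = Suc s * (K choose Suc s)"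
  using binomial_absorb_comp[of K s] binomial_absorption[of s K] by simp

lemma jac_deriv:
  fixes x :: real
  shows "((\<lambda>y. ((y^2-1)/4)^2 * jacobiP 2 2 k y) has_real_derivative
          ((real k+1)/2 * ((x^2-1)/4) * jacobiP 1 1 (k+1) x)) (at x)"
proof -
  obtain K where K: "K = k + 2" by blast
  define T where "T s y = real ((K choose (s+2)) * (K choose s)) * ((y-1)/2)^(s+2) * ((y+1)/2)^(k-s+2)" for s y
  define T' where "T' s y = real ((K choose (s+2)) * (K choose s)) *
     (real (s+2) * ((y-1)/2)^(s+1) * (1/2) * ((y+1)/2)^(k-s+2)
      + ((y-1)/2)^(s+2) * (real (k-s+2) * ((y+1)/2)^(k-s+1) * (1/2)))" for s y
  have e1: "((y^2-1)/4)^2 * jacobiP 2 2 k y = (\<Sum>s=0..k. T s y)" for y :: real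
  proof -
    have "((y^2-1)/4)^2 * jacobiP 2 2 k y =
      (\<Sum>s=0..k. ((y^2-1)/4)^2 * (real (K choose (k - s)) * real (K choose s)
       * ((y - 1) / 2) ^ s * ((y + 1) / 2) ^ (k - s)))"
      unfolding jacobiP_def K by (simp add: sum_distrib_left)
    also have "\<dots> = (\<Sum>s=0..k. T s y)"
    proof (rule sum.cong[OF refl])
      fix s assume s: "s \<in> {0..k}"
      have c: "K choose (k-s) = K choose (s+2)"
        using binomial_symmetric[of "k-s" "K"] s K by simp
      have q: "(y^2-1)/4 = ((y-1)/2) * ((y+1)/2)" by (simp add: power2_eq_square field_simps)
      show "((y^2-1)/4)^2 * (real (K choose (k - s)) * real (K choose s)
       * ((y - 1) / 2) ^ s * ((y + 1) / 2) ^ (k - s)) = T s y"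
        unfolding T_def c q by (simp add: power_add power_mult_distrib power2_eq_square mult_ac)
    qed
    finally show ?thesis .
  qed
  have dT: "(T s has_real_derivative T' s x) (at x)" for s
    unfolding T_def T'_def
    by (rule derivative_eq_intros refl | simp)+ (simp add: algebra_simps)
  have fe: "(\<lambda>y. ((y^2-1)/4)^2 * jacobiP 2 2 k y) = (\<lambda>y. \<Sum>s=0..k. T s y)"
    using e1 by auto
  have D: "((\<lambda>y. ((y^2-1)/4)^2 * jacobiP 2 2 k y) has_real_derivative (\<Sum>s=0..k. T' s x)) (at x)"
    unfolding fe by (rule DERIV_sum) (rule dT)
  define u where "u = (x-1)/2"
  define w where "w = (x+1)/2"
  define A where "A t = real ((K choose (t+2)) * (K choose t)) * real (t+2) * u^(t+1) * w^(k+2-t) / 2" for t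
  define B where "B s = real ((K choose (s+2)) * (K choose s)) * real (k-s+2) * u^(s+2) * w^(k-s+1) / 2" for s
  define R where "R t = (real k+1)/2 * real ((K choose (t+1)) * (K choose t)) * u^(t+1) * w^(k+2-t)" for t
  have TAB: "T' s x = A s + B s" if "s \<le> k" for s
  proof -
    have e: "k + 2 - s = k - s + 2" using that by simp
    show ?thesis unfolding T'_def A_def B_def e u_def[symmetric] w_def[symmetric]
      by (simp add: field_simps)
  qed
  have RHS: "(real k+1)/2 * ((x^2-1)/4) * jacobiP 1 1 (k+1) x = (\<Sum>t=0..k+1. R t)"
  proof -
    have "(real k+1)/2 * ((x^2-1)/4) * jacobiP 1 1 (k+1) x =
       (real k+1)/2 * (u*w) * (\<Sum>t=0..k+1. (real (K choose (k+1-t)) * real (K choose t) * u^t * w^(k+1-t)))"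
    proof -
      have q: "(x^2-1)/4 = u * w" unfolding u_def w_def by (simp add: power2_eq_square field_simps)
      have k2: "k + 1 + 1 = K" using K by simp
      show ?thesis unfolding jacobiP_def q k2 u_def[symmetric] w_def[symmetric] ..
    qed
    also have "\<dots> = (\<Sum>t=0..k+1. (real k+1)/2 * (u*w) * (real (K choose (k+1-t)) * real (K choose t) * u^t * w^(k+1-t)))"
      by (rule sum_distrib_left)
    also have "\<dots> = (\<Sum>t=0..k+1. R t)"
    proof (rule sum.cong[OF refl])
      fix t assume t: "t \<in> {0..k+1}"
      have c: "K choose (k+1-t) = K choose (t+1)"
        using binomial_symmetric[of "k+1-t" "K"] t K by simp
      have e: "k + 2 - t = Suc (k+1-t)" using t by simp
      show "(real k+1)/2 * (u*w) * (real (K choose (k+1-t)) * real (K choose t) * u^t * w^(k+1-t)) = R t"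
        unfolding R_def c e by (simp add: mult_ac)
    qed
    finally show ?thesis .
  qed
  have sA: "(\<Sum>s=0..k. A s) = A 0 + (\<Sum>s=0..k. A (Suc s))"
  proof -
    have "K choose (k+1+2) = 0" using K by (simp add: binomial_eq_0)
    then have "A (k+1) = 0" unfolding A_def by simp
    then have "(\<Sum>s=0..k. A s) = (\<Sum>s=0..Suc k. A s)" by simp
    also have "\<dots> = A 0 + (\<Sum>s=Suc 0..Suc k. A s)" by (rule sum.atLeast_Suc_atMost) simp
    also have "\<dots> = A 0 + (\<Sum>s=0..k. A (Suc s))" by (simp only: sum.shift_bounds_cl_Suc_ivl)
    finally show ?thesis .
  qed
  have sR: "(\<Sum>t=0..k+1. R t) = R 0 + (\<Sum>s=0..k. R (Suc s))"
  proof -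
    have "(\<Sum>t=0..k+1. R t) = R 0 + (\<Sum>s=Suc 0..Suc k. R s)" by (simp add: sum.atLeast_Suc_atMost)
    also have "\<dots> = R 0 + (\<Sum>s=0..k. R (Suc s))" by (simp only: sum.shift_bounds_cl_Suc_ivl)
    finally show ?thesis .
  qed
  have R0: "R 0 = A 0"
  proof -
    have "(K - 1) * (K choose 1) = Suc 1 * (K choose Suc 1)" by (rule binom_id2)
    then have "(k + 1) * K = 2 * (K choose 2)" using K by (simp add: numeral_2_eq_2)
    then have "(real k + 1) * real K = 2 * real (K choose 2)"
      by (metis of_nat_mult of_nat_Suc of_nat_numeral add.commute Suc_eq_plus1)
    then show ?thesis unfolding R_def A_def by (simp add: numeral_2_eq_2)
  qed
  have RS: "R (Suc s) = A (Suc s) + B s" if "s \<le> k" for s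
  proof -
    have n1: "Suc (Suc (Suc s)) * (K choose Suc (Suc (Suc s))) = (k - s) * (K choose Suc (Suc s))"
      using binom_id1[of s K] K by simp
    have h1: "(real s + 3) * real (K choose Suc (Suc (Suc s))) = (real k - real s) * real (K choose Suc (Suc s))"
    proof -
      have "real (Suc (Suc (Suc s)) * (K choose Suc (Suc (Suc s)))) = real ((k - s) * (K choose Suc (Suc s)))"
        using n1 by simp
      then show ?thesis using that by (simp add: of_nat_diff algebra_simps)
    qed
    have n2: "(k - s + 2) * (K choose s) = Suc s * (K choose Suc s)"
      using binom_id2[of K s] K that by (simp add: Suc_diff_le)
    have h2: "(real k - real s + 2) * real (K choose s) = (real s + 1) * real (K choose Suc s)"
    proof -
      have "real (k - s + 2) * real (K choose s) = real (Suc s) * real (K choose Suc s)"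
        using arg_cong[OF n2, of real] by (simp only: of_nat_mult)
      moreover have "real (k - s + 2) = real k - real s + 2" using that by (simp add: of_nat_diff)
      ultimately show ?thesis by (simp add: algebra_simps)
    qed
    have e: "k + 2 - Suc s = k - s + 1" using that by simp
    have "A (Suc s) + B s = (real s + 3) * real (K choose Suc (Suc (Suc s))) * real (K choose Suc s) * u^(s+2) * w^(k-s+1) / 2
         + (real k - real s + 2) * real (K choose s) * real (K choose (s+2)) * u^(s+2) * w^(k-s+1) / 2"
      unfolding A_def B_def e using that by (simp add: of_nat_diff algebra_simps)
    also have "\<dots> = (real k - real s) * real (K choose Suc (Suc s)) * real (K choose Suc s) * u^(s+2) * w^(k-s+1) / 2
         + (real s + 1) * real (K choose Suc s) * real (K choose (s+2)) * u^(s+2) * w^(k-s+1) / 2"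
      unfolding h1 h2 ..
    also have "\<dots> = R (Suc s)" unfolding R_def e by (simp add: field_simps)
    finally show ?thesis by simp
  qed
  have "(\<Sum>s=0..k. T' s x) = (\<Sum>s=0..k. A s) + (\<Sum>s=0..k. B s)"
    by (simp add: TAB sum.distrib)
  also have "\<dots> = R 0 + (\<Sum>s=0..k. A (Suc s) + B s)"
    by (simp add: sA R0 sum.distrib)
  also have "\<dots> = R 0 + (\<Sum>s=0..k. R (Suc s))" using RS by simp
  also have "\<dots> = (\<Sum>t=0..k+1. R t)" by (rule sR[symmetric])
  finally have "(\<Sum>s=0..k. T' s x) = (real k+1)/2 * ((x^2-1)/4) * jacobiP 1 1 (k+1) x"
    using RHS by simp
  then show ?thesis using D by (simp only:)
qed

abbreviation fd where "fd g y \<equiv> frechet_derivative g (at y)"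

lemma line_deriv:
  fixes g :: "real^2 \<Rightarrow> real"
  assumes "g differentiable at (y + s *\<^sub>R e)"
  shows "((\<lambda>t. g (y + t *\<^sub>R e)) has_real_derivative fd g (y + s *\<^sub>R e) e) (at s)"
proof -
  have dg: "(g has_derivative fd g (y + s *\<^sub>R e)) (at (y + s *\<^sub>R e))"
    using assms frechet_derivative_works by blast
  have lin: "linear (fd g (y + s *\<^sub>R e))"
    using dg has_derivative_linear by blast
  have dl: "((\<lambda>t. y + t *\<^sub>R e) has_derivative (\<lambda>t. t *\<^sub>R e)) (at s)"
    by (auto intro!: derivative_eq_intros)
  have "((\<lambda>t. g (y + t *\<^sub>R e)) has_derivative (\<lambda>t. fd g (y + s *\<^sub>R e) (t *\<^sub>R e))) (at s)"
    using has_derivative_compose[OF dl, of g] dg by simp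
  moreover have "(\<lambda>t. fd g (y + s *\<^sub>R e) (t *\<^sub>R e)) = (\<lambda>t. fd g (y + s *\<^sub>R e) e * t)"
    using linear_scale[OF lin] by (auto simp: mult.commute)
  ultimately show ?thesis by (simp add: has_field_derivative_def)
qed

lemma line_deriv0:
  fixes g :: "real^2 \<Rightarrow> real"
  assumes "g differentiable at y"
  shows "((\<lambda>t. g (y + t *\<^sub>R e)) has_real_derivative fd g y e) (at 0)"
  using line_deriv[of g y 0 e] assms by simp

lemma vec2_expand: "(h::real^2) = h$1 *\<^sub>R axis 1 1 + h$2 *\<^sub>R axis 2 1"
  by (simp add: vec_eq_iff forall_2 axis_def)

lemma fd_expand:
  fixes g :: "real^2 \<Rightarrow> real"
  assumes "g differentiable at x"
  shows "fd g x h = h$1 * pdiff 1 g x + h$2 * pdiff 2 g x"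
proof -
  have "linear (fd g x)" using assms frechet_derivative_works has_derivative_linear by blast
  then have "fd g x (h$1 *\<^sub>R axis 1 1 + h$2 *\<^sub>R axis 2 1) = h$1 * pdiff 1 g x + h$2 * pdiff 2 g x"
    by (simp add: linear_add linear_scale pdiff_def)
  then show ?thesis using vec2_expand[of h] by simp
qed

lemma fd_component:
  fixes F :: "real^2 \<Rightarrow> real^2"
  assumes "F differentiable at x"
  shows "(\<lambda>y. F y $ i) differentiable at x" "fd F x h $ i = fd (\<lambda>y. F y $ i) x h"
proof -
  have dF: "(F has_derivative fd F x) (at x)" using assms frechet_derivative_works by blast
  have d: "((\<lambda>y. F y $ i) has_derivative (\<lambda>h. fd F x h $ i)) (at x)"
    using bounded_linear.has_derivative[OF bounded_linear_vec_nth dF] .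
  then show "(\<lambda>y. F y $ i) differentiable at x" unfolding differentiable_def by blast
  show "fd F x h $ i = fd (\<lambda>y. F y $ i) x h"
    by (simp add: frechet_derivative_at[OF d, symmetric])
qed

lemma mixed_mvt:
  fixes g :: "real^2 \<Rightarrow> real"
  assumes h: "0 < h"
    and D: "\<And>a b. 0 \<le> a \<Longrightarrow> a \<le> h \<Longrightarrow> 0 \<le> b \<Longrightarrow> b \<le> h \<Longrightarrow>
             g differentiable at (\<xi> + a *\<^sub>R e + b *\<^sub>R f) \<and>
             (\<lambda>y. fd g y e) differentiable at (\<xi> + a *\<^sub>R e + b *\<^sub>R f)"
  shows "\<exists>\<sigma> \<tau>. 0 < \<sigma> \<and> \<sigma> < h \<and> 0 < \<tau> \<and> \<tau> < h \<and>
     g (\<xi> + h *\<^sub>R e + h *\<^sub>R f) - g (\<xi> + h *\<^sub>R e) - g (\<xi> + h *\<^sub>R f) + g \<xi>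
       = h * h * fd (\<lambda>y. fd g y e) (\<xi> + \<sigma> *\<^sub>R e + \<tau> *\<^sub>R f) f"
proof -
  define \<phi> where "\<phi> s = g ((\<xi> + h *\<^sub>R f) + s *\<^sub>R e) - g (\<xi> + s *\<^sub>R e)" for s
  have d\<phi>: "(\<phi> has_real_derivative (fd g (\<xi> + s *\<^sub>R e + h *\<^sub>R f) e - fd g (\<xi> + s *\<^sub>R e) e)) (at s)"
    if "0 \<le> s" "s \<le> h" for s
  proof -
    have p: "\<xi> + h *\<^sub>R f + s *\<^sub>R e = \<xi> + s *\<^sub>R e + h *\<^sub>R f" by (simp add: algebra_simps)
    have a1: "g differentiable at ((\<xi> + h *\<^sub>R f) + s *\<^sub>R e)" using D[of s h] that h by (simp add: p)
    have a2: "g differentiable at (\<xi> + s *\<^sub>R e)" using D[of s 0] that h by simp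
    show ?thesis unfolding \<phi>_def
      using DERIV_diff[OF line_deriv[OF a1] line_deriv[OF a2]] p by simp
  qed
  obtain \<sigma> where \<sigma>: "0 < \<sigma>" "\<sigma> < h"
    and e\<phi>: "\<phi> h - \<phi> 0 = (h - 0) * (fd g (\<xi> + \<sigma> *\<^sub>R e + h *\<^sub>R f) e - fd g (\<xi> + \<sigma> *\<^sub>R e) e)"
    using MVT2[OF h, of \<phi> "\<lambda>s. fd g (\<xi> + s *\<^sub>R e + h *\<^sub>R f) e - fd g (\<xi> + s *\<^sub>R e) e"] d\<phi> by auto
  define \<psi> where "\<psi> t = fd g ((\<xi> + \<sigma> *\<^sub>R e) + t *\<^sub>R f) e" for t
  have d\<psi>: "(\<psi> has_real_derivative fd (\<lambda>y. fd g y e) (\<xi> + \<sigma> *\<^sub>R e + t *\<^sub>R f) f) (at t)"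
    if "0 \<le> t" "t \<le> h" for t
  proof -
    have a1: "(\<lambda>y. fd g y e) differentiable at ((\<xi> + \<sigma> *\<^sub>R e) + t *\<^sub>R f)"
      using D[of \<sigma> t] that \<sigma> by simp
    show ?thesis unfolding \<psi>_def using line_deriv[OF a1] by simp
  qed
  obtain \<tau> where \<tau>: "0 < \<tau>" "\<tau> < h"
    and e\<psi>: "\<psi> h - \<psi> 0 = (h - 0) * fd (\<lambda>y. fd g y e) (\<xi> + \<sigma> *\<^sub>R e + \<tau> *\<^sub>R f) f"
    using MVT2[OF h, of \<psi> "\<lambda>t. fd (\<lambda>y. fd g y e) (\<xi> + \<sigma> *\<^sub>R e + t *\<^sub>R f) f"] d\<psi> by auto
  have "g (\<xi> + h *\<^sub>R e + h *\<^sub>R f) - g (\<xi> + h *\<^sub>R e) - g (\<xi> + h *\<^sub>R f) + g \<xi> = \<phi> h - \<phi> 0"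
    unfolding \<phi>_def by (simp add: algebra_simps)
  also have "\<dots> = h * (\<psi> h - \<psi> 0)" using e\<phi> unfolding \<psi>_def by simp
  also have "\<dots> = h * h * fd (\<lambda>y. fd g y e) (\<xi> + \<sigma> *\<^sub>R e + \<tau> *\<^sub>R f) f" using e\<psi> by simp
  finally show ?thesis using \<sigma> \<tau> by blast
qed

lemma norm_ab: "norm (a *\<^sub>R axis i (1::real) + b *\<^sub>R axis j 1 :: real^2) \<le> \<bar>a\<bar> + \<bar>b\<bar>"
  using norm_triangle_ineq[of "a *\<^sub>R axis i (1::real)" "b *\<^sub>R axis j 1 :: real^2"] by simp

lemma clairaut:
  fixes g :: "real^2 \<Rightarrow> real"
  assumes U: "open U" "\<xi> \<in> U"
    and D: "\<And>y. y \<in> U \<Longrightarrow> g differentiable at y \<and> pdiff 1 g differentiable at y \<and> pdiff 2 g differentiable at y"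
    and c1: "isCont (pdiff 2 (pdiff 1 g)) \<xi>" and c2: "isCont (pdiff 1 (pdiff 2 g)) \<xi>"
  shows "pdiff 2 (pdiff 1 g) \<xi> = pdiff 1 (pdiff 2 g) \<xi>"
proof (rule ccontr)
  assume ne: "pdiff 2 (pdiff 1 g) \<xi> \<noteq> pdiff 1 (pdiff 2 g) \<xi>"
  define e1 :: "real^2" where "e1 = axis 1 1"
  define e2 :: "real^2" where "e2 = axis 2 1"
  have p1: "pdiff 1 g = (\<lambda>y. fd g y e1)" by (rule ext) (simp add: pdiff_def e1_def)
  have p2: "pdiff 2 g = (\<lambda>y. fd g y e2)" by (rule ext) (simp add: pdiff_def e2_def)
  have p21: "pdiff 2 (pdiff 1 g) y = fd (\<lambda>y. fd g y e1) y e2" for y by (simp add: pdiff_def e2_def p1)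
  have p12: "pdiff 1 (pdiff 2 g) y = fd (\<lambda>y. fd g y e2) y e1" for y by (simp add: pdiff_def e1_def p2)
  obtain r where r: "r > 0" "ball \<xi> r \<subseteq> U" using U open_contains_ball by blast
  define \<epsilon> where "\<epsilon> = \<bar>pdiff 2 (pdiff 1 g) \<xi> - pdiff 1 (pdiff 2 g) \<xi>\<bar> / 2"
  have \<epsilon>: "\<epsilon> > 0" using ne by (simp add: \<epsilon>_def)
  obtain d1 where d1: "d1 > 0" "\<And>y. dist y \<xi> < d1 \<Longrightarrow> dist (pdiff 2 (pdiff 1 g) y) (pdiff 2 (pdiff 1 g) \<xi>) < \<epsilon>"
    using c1 \<epsilon> unfolding continuous_at_eps_delta by blast
  obtain d2 where d2: "d2 > 0" "\<And>y. dist y \<xi> < d2 \<Longrightarrow> dist (pdiff 1 (pdiff 2 g) y) (pdiff 1 (pdiff 2 g) \<xi>) < \<epsilon>"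
    using c2 \<epsilon> unfolding continuous_at_eps_delta by blast
  define h where "h = min r (min d1 d2) / 4"
  have h: "h > 0" "2 * h < r" "2 * h < d1" "2 * h < d2" using r d1 d2 by (auto simp: h_def)
  have inU: "\<xi> + a *\<^sub>R e + b *\<^sub>R f \<in> U" if ab: "0 \<le> a" "a \<le> h" "0 \<le> b" "b \<le> h"
     "e \<in> {e1, e2}" "f \<in> {e1, e2}" for a b e f
  proof -
    obtain i j where "e = axis i 1" "f = axis j 1" using ab(5,6) unfolding e1_def e2_def by blast
    then have "norm (a *\<^sub>R e + b *\<^sub>R f) \<le> \<bar>a\<bar> + \<bar>b\<bar>"
      using norm_ab[of a i b j] by simp
    then have "dist (\<xi> + a *\<^sub>R e + b *\<^sub>R f) \<xi> < r" using that h by (simp add: dist_norm add.assoc)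
    then show ?thesis using r by (auto simp: dist_commute)
  qed
  have Dg: "g differentiable at y \<and> (\<lambda>y. fd g y e1) differentiable at y \<and> (\<lambda>y. fd g y e2) differentiable at y"
    if "y \<in> U" for y using D[OF that] p1 p2 by simp
  obtain \<sigma> \<tau> where st: "0 < \<sigma>" "\<sigma> < h" "0 < \<tau>" "\<tau> < h"
    and E1: "g (\<xi> + h *\<^sub>R e1 + h *\<^sub>R e2) - g (\<xi> + h *\<^sub>R e1) - g (\<xi> + h *\<^sub>R e2) + g \<xi>
       = h * h * fd (\<lambda>y. fd g y e1) (\<xi> + \<sigma> *\<^sub>R e1 + \<tau> *\<^sub>R e2) e2"
    using mixed_mvt[OF h(1), of g \<xi> e1 e2] Dg inU by blast
  obtain \<sigma>' \<tau>' where st': "0 < \<sigma>'" "\<sigma>' < h" "0 < \<tau>'" "\<tau>' < h"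
    and E2: "g (\<xi> + h *\<^sub>R e2 + h *\<^sub>R e1) - g (\<xi> + h *\<^sub>R e2) - g (\<xi> + h *\<^sub>R e1) + g \<xi>
       = h * h * fd (\<lambda>y. fd g y e2) (\<xi> + \<sigma>' *\<^sub>R e2 + \<tau>' *\<^sub>R e1) e1"
    using mixed_mvt[OF h(1), of g \<xi> e2 e1] Dg inU by blast
  define q1 where "q1 = \<xi> + \<sigma> *\<^sub>R e1 + \<tau> *\<^sub>R e2"
  define q2 where "q2 = \<xi> + \<sigma>' *\<^sub>R e2 + \<tau>' *\<^sub>R e1"
  have sw: "\<xi> + h *\<^sub>R e2 + h *\<^sub>R e1 = \<xi> + h *\<^sub>R e1 + h *\<^sub>R e2" by (simp add: algebra_simps)
  have "h * h * fd (\<lambda>y. fd g y e1) (\<xi> + \<sigma> *\<^sub>R e1 + \<tau> *\<^sub>R e2) e2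
      = h * h * fd (\<lambda>y. fd g y e2) (\<xi> + \<sigma>' *\<^sub>R e2 + \<tau>' *\<^sub>R e1) e1"
    using E1 E2[unfolded sw] by linarith
  then have "h * h * pdiff 2 (pdiff 1 g) q1 = h * h * pdiff 1 (pdiff 2 g) q2"
    unfolding p21 p12 q1_def q2_def .
  then have eq: "pdiff 2 (pdiff 1 g) q1 = pdiff 1 (pdiff 2 g) q2" using h by simp
  have "norm (\<sigma> *\<^sub>R e1 + \<tau> *\<^sub>R e2) \<le> \<bar>\<sigma>\<bar> + \<bar>\<tau>\<bar>" using norm_ab unfolding e1_def e2_def by auto
  then have dq1: "dist q1 \<xi> < 2 * h" using st by (simp add: q1_def dist_norm add.assoc)
  have "norm (\<sigma>' *\<^sub>R e2 + \<tau>' *\<^sub>R e1) \<le> \<bar>\<sigma>'\<bar> + \<bar>\<tau>'\<bar>" using norm_ab unfolding e1_def e2_def by auto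
  then have dq2: "dist q2 \<xi> < 2 * h" using st' by (simp add: q2_def dist_norm add.assoc)
  have a1: "dist (pdiff 2 (pdiff 1 g) q1) (pdiff 2 (pdiff 1 g) \<xi>) < \<epsilon>" using d1(2) dq1 h by simp
  have a2: "dist (pdiff 1 (pdiff 2 g) q2) (pdiff 1 (pdiff 2 g) \<xi>) < \<epsilon>" using d2(2) dq2 h by simp
  have "\<bar>pdiff 2 (pdiff 1 g) \<xi> - pdiff 1 (pdiff 2 g) \<xi>\<bar> < 2 * \<epsilon>"
    using a1 a2 eq by (simp add: dist_real_def)
  then show False by (simp add: \<epsilon>_def)
qed

lemma jacobiP_poly: "\<exists>p. \<forall>x. jacobiP a b n x = poly p x"
proof
  show "\<forall>x. jacobiP a b n x = poly (\<Sum>s=0..n. smult (real ((n + a) choose (n - s)) * real ((n + b) choose s))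
     ([:-1/2, 1/2:]^s * [:1/2, 1/2:]^(n-s))) x"
    by (simp add: jacobiP_def poly_sum mult.assoc add_divide_distrib diff_divide_distrib add.commute)
qed

lemma psi_poly: "\<exists>p. \<forall>x. psi_basis k x = poly p x"
proof -
  obtain p where p: "\<forall>x. jacobiP 1 1 (k-2) x = poly p x" using jacobiP_poly by blast
  then have p': "jacobiP 1 1 (k-2) = poly p" by auto
  show ?thesis
    by (rule exI[of _ "smult (sqrt (2 * (2 * real k - 1)) / (real k - 1)) ([:-1/4, 0, 1/4:] * p)"])
       (unfold psi_basis_def jacobiP_m1_def p', simp add: power2_eq_square field_simps)
qed

lemma phi_poly: "\<exists>p. \<forall>x. phi_basis k x = poly p x"
proof -
  obtain p where p: "\<forall>x. jacobiP 2 2 (k-4) x = poly p x" using jacobiP_poly by blast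
  show ?thesis
    by (rule exI[of _ "smult (sqrt (8 * (2 * real k - 3)) / ((real k - 3) * (real k - 2))) ([:-1/4, 0, 1/4:]^2 * p)"])
       (simp add: phi_basis_def jacobiP_m2_def p power2_eq_square field_simps)
qed

lemma poly_nice:
  assumes "\<forall>x. f x = poly p x"
  shows "\<exists>f'. (\<forall>x. (f has_real_derivative f' x) (at x)) \<and> continuous_on UNIV f'"
proof -
  have f: "f = poly p" using assms by auto
  show ?thesis unfolding f
    by (rule exI[of _ "poly (pderiv p)"]) (auto intro: poly_DERIV continuous_at_imp_continuous_on poly_isCont)
qed

lemma psi_nice: "\<exists>f'. (\<forall>x. (psi_basis k has_real_derivative f' x) (at x)) \<and> continuous_on UNIV f'"
  using psi_poly poly_nice by blast

lemma phi_nice: "\<exists>f'. (\<forall>x. (phi_basis k has_real_derivative f' x) (at x)) \<and> continuous_on UNIV f'"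
  using phi_poly poly_nice by blast

lemma psi_cont: "continuous_on UNIV (psi_basis k)"
proof -
  obtain p where "\<forall>x. psi_basis k x = poly p x" using psi_poly by blast
  then have "psi_basis k = poly p" by auto
  then show ?thesis by (auto intro: continuous_at_imp_continuous_on poly_isCont)
qed

lemma alg_aux: fixes m r Y Z :: real assumes "m > 0"
  shows "2 * r / (m * (m + 1)) * (m / 2 * Y * Z) = r / (m + 1) * (Y * Z)"
proof -
  have "m + m * m > 0" using assms by (simp add: add_pos_pos)
  then have "m + m * m \<noteq> 0" by simp
  moreover have "m + 1 \<noteq> 0" "m \<noteq> 0" using assms by auto
  ultimately show ?thesis by (simp add: field_simps)
qed

lemma phi_deriv:
  assumes m: "1 \<le> m"
  shows "(phi_basis (m+3) has_real_derivative psi_basis (m+2) x) (at x)"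
proof -
  define C where "C = sqrt (8 * (2 * real (m+3) - 3)) / ((real (m+3) - 3) * (real (m+3) - 2))"
  have e: "phi_basis (m+3) = (\<lambda>y. C * (((y^2-1)/4)^2 * jacobiP 2 2 (m-1) y))"
    by (rule ext) (simp add: phi_basis_def jacobiP_m2_def C_def)
  have d: "((\<lambda>y. C * (((y^2-1)/4)^2 * jacobiP 2 2 (m-1) y)) has_real_derivative
      C * ((real (m-1)+1)/2 * ((x^2-1)/4) * jacobiP 1 1 (m-1+1) x)) (at x)"
    by (rule DERIV_cmult[OF jac_deriv])
  define r where "r = sqrt (2 * (2 * real m + 3))"
  have s: "sqrt (8 * (2 * real (m+3) - 3)) = 2 * r"
  proof -
    have "sqrt (8 * (2 * real (m+3) - 3)) = sqrt (4 * (2 * (2 * real m + 3)))" by (simp add: algebra_simps)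
    also have "\<dots> = sqrt 4 * sqrt (2 * (2 * real m + 3))" by (rule real_sqrt_mult)
    finally show ?thesis by (simp add: r_def)
  qed
  have c1: "C = 2 * r / (real m * (real m + 1))" unfolding C_def s by simp
  have c2: "psi_basis (m+2) x = r / (real m + 1) * ((x^2-1)/4 * jacobiP 1 1 m x)"
    unfolding psi_basis_def jacobiP_m1_def r_def by (simp add: algebra_simps)
  have m0: "real m > 0" using m by simp
  have c3: "real (m-1) + 1 = real m" using m by (simp add: of_nat_diff)
  have c4: "m - 1 + 1 = m" using m by simp
  have "C * ((real (m-1)+1)/2 * ((x^2-1)/4) * jacobiP 1 1 (m-1+1) x) = psi_basis (m+2) x"
    unfolding c1 c2 c3 c4 by (rule alg_aux[OF m0])
  then show ?thesis using d e by simp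
qed

lemma real_diff_of_deriv: "(f has_real_derivative D) (at x) \<Longrightarrow> f differentiable (at x)"
  using has_field_derivative_imp_has_derivative differentiable_def by blast

lemma comp_nth_differentiable:
  assumes "\<And>y. (f has_real_derivative f' y) (at y)"
  shows "(\<lambda>\<xi>::real^2. f (\<xi>$i)) differentiable at \<xi>"
proof -
  have "(\<lambda>\<xi>::real^2. \<xi>$i) differentiable at \<xi>"
    using bounded_linear_imp_differentiable[OF bounded_linear_vec_nth] by blast
  then show ?thesis using differentiable_compose[of f "\<lambda>\<xi>::real^2. \<xi>$i"] real_diff_of_deriv assms by blast
qed

lemma line_comp: "((\<xi>::real^2) + t *\<^sub>R axis 1 1) $ 1 = \<xi>$1 + t" "(\<xi> + t *\<^sub>R axis 1 1) $ 2 = \<xi>$2"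
  "(\<xi> + t *\<^sub>R axis 2 1) $ 1 = \<xi>$1" "(\<xi> + t *\<^sub>R axis 2 1) $ 2 = \<xi>$2 + t"
  by (simp_all add: axis_def)

lemma sep_sum:
  fixes f g f' g' :: "nat \<Rightarrow> real \<Rightarrow> real" and c :: "nat \<Rightarrow> nat \<Rightarrow> real"
  assumes fA: "finite A" and fB: "finite B"
    and df: "\<And>m x. (f m has_real_derivative f' m x) (at x)"
    and dg: "\<And>n x. (g n has_real_derivative g' n x) (at x)"
  defines "T \<equiv> \<lambda>\<xi>::real^2. \<Sum>m\<in>A. \<Sum>n\<in>B. c m n * (f m (\<xi>$1) * g n (\<xi>$2))"
  shows "T differentiable at \<xi>"
    and "pdiff 1 T \<xi> = (\<Sum>m\<in>A. \<Sum>n\<in>B. c m n * (f' m (\<xi>$1) * g n (\<xi>$2)))"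
    and "pdiff 2 T \<xi> = (\<Sum>m\<in>A. \<Sum>n\<in>B. c m n * (f m (\<xi>$1) * g' n (\<xi>$2)))"
proof -
  show dT: "T differentiable at \<xi>" unfolding T_def
    using fA fB comp_nth_differentiable[OF df] comp_nth_differentiable[OF dg]
    by (intro differentiable_sum ballI differentiable_mult differentiable_const) auto
  have l1: "((\<lambda>t. T (\<xi> + t *\<^sub>R axis 1 1)) has_real_derivative
      (\<Sum>m\<in>A. \<Sum>n\<in>B. c m n * (f' m (\<xi>$1) * g n (\<xi>$2)))) (at 0)"
  proof -
    have "((\<lambda>t. f m (\<xi>$1 + t)) has_real_derivative f' m (\<xi>$1)) (at 0)" for m
      using DERIV_shift[of "f m" "f' m (\<xi>$1)" 0 "\<xi>$1"] df by (simp add: add.commute)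
    then show ?thesis unfolding T_def line_comp
      by (intro DERIV_sum DERIV_cmult DERIV_cmult_right) (simp add: mult.commute)
  qed
  have l2: "((\<lambda>t. T (\<xi> + t *\<^sub>R axis 2 1)) has_real_derivative
      (\<Sum>m\<in>A. \<Sum>n\<in>B. c m n * (f m (\<xi>$1) * g' n (\<xi>$2)))) (at 0)"
  proof -
    have "((\<lambda>t. g n (\<xi>$2 + t)) has_real_derivative g' n (\<xi>$2)) (at 0)" for n
      using DERIV_shift[of "g n" "g' n (\<xi>$2)" 0 "\<xi>$2"] dg by (simp add: add.commute)
    then show ?thesis unfolding T_def line_comp
      by (intro DERIV_sum DERIV_cmult DERIV_cmult) 
  qed
  show "pdiff 1 T \<xi> = (\<Sum>m\<in>A. \<Sum>n\<in>B. c m n * (f' m (\<xi>$1) * g n (\<xi>$2)))"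
    using DERIV_unique[OF line_deriv0[OF dT] l1] by (simp add: pdiff_def)
  show "pdiff 2 T \<xi> = (\<Sum>m\<in>A. \<Sum>n\<in>B. c m n * (f m (\<xi>$1) * g' n (\<xi>$2)))"
    using DERIV_unique[OF line_deriv0[OF dT] l2] by (simp add: pdiff_def)
qed

lemma sep_cont:
  fixes p q :: "nat \<Rightarrow> real \<Rightarrow> real"
  assumes "\<And>m. continuous_on UNIV (p m)" "\<And>n. continuous_on UNIV (q n)"
  shows "continuous_on S (\<lambda>\<xi>::real^2. \<Sum>m\<in>A. \<Sum>n\<in>B. c m n * (p m (\<xi>$1) * q n (\<xi>$2)))"
proof -
  have c1: "continuous_on S (\<lambda>\<xi>::real^2. p m (\<xi>$1))" for m
    by (rule continuous_on_compose2[OF assms(1)]) (auto intro: continuous_intros)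
  have c2: "continuous_on S (\<lambda>\<xi>::real^2. q n (\<xi>$2))" for n
    by (rule continuous_on_compose2[OF assms(2)]) (auto intro: continuous_intros)
  show ?thesis by (intro continuous_intros c1 c2)
qed

lemma piola_alg:
  fixes a11 a12 a21 a22 b111 b112 b121 b122 b211 b212 b221 b222 x1 x2 y11 y12 y21 y22 D :: real
  assumes D: "D = a11*a22 - a12*a21" "D \<noteq> 0"
    and s: "b112 = b121" "b212 = b221" "y22 = - y11"
  shows "a22 * (((b111 * x1 + y11 * a11 + (b121 * x2 + y21 * a12)) * D - (a11*x1 + a12*x2) * (b111 * a22 + b221 * a11 - (b121 * a21 + b211 * a12))) / (D*D))
       - a21 * (((b112 * x1 + y12 * a11 + (b122 * x2 + y22 * a12)) * D - (a11*x1 + a12*x2) * (b112 * a22 + b222 * a11 - (b122 * a21 + b212 * a12))) / (D*D))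
       + (a11 * (((b212 * x1 + y12 * a21 + (b222 * x2 + y22 * a22)) * D - (a21*x1 + a22*x2) * (b112 * a22 + b222 * a11 - (b122 * a21 + b212 * a12))) / (D*D))
       - a12 * (((b211 * x1 + y11 * a21 + (b221 * x2 + y21 * a22)) * D - (a21*x1 + a22*x2) * (b111 * a22 + b221 * a11 - (b121 * a21 + b211 * a12))) / (D*D))) = 0"
proof -
  define Q where "Q = a22 * (((b111 * x1 + y11 * a11 + (b121 * x2 + y21 * a12)) * D - (a11*x1 + a12*x2) * (b111 * a22 + b221 * a11 - (b121 * a21 + b211 * a12))))
       - a21 * (((b112 * x1 + y12 * a11 + (b122 * x2 + y22 * a12)) * D - (a11*x1 + a12*x2) * (b112 * a22 + b222 * a11 - (b122 * a21 + b212 * a12))))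
       + (a11 * (((b212 * x1 + y12 * a21 + (b222 * x2 + y22 * a22)) * D - (a21*x1 + a22*x2) * (b112 * a22 + b222 * a11 - (b122 * a21 + b212 * a12))))
       - a12 * (((b211 * x1 + y11 * a21 + (b221 * x2 + y21 * a22)) * D - (a21*x1 + a22*x2) * (b111 * a22 + b221 * a11 - (b121 * a21 + b211 * a12)))))"
  have Q: "Q = 0" unfolding Q_def D(1) s by algebra
  have "a22 * (((b111 * x1 + y11 * a11 + (b121 * x2 + y21 * a12)) * D - (a11*x1 + a12*x2) * (b111 * a22 + b221 * a11 - (b121 * a21 + b211 * a12))) / (D*D))
       - a21 * (((b112 * x1 + y12 * a11 + (b122 * x2 + y22 * a12)) * D - (a11*x1 + a12*x2) * (b112 * a22 + b222 * a11 - (b122 * a21 + b212 * a12))) / (D*D))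
       + (a11 * (((b212 * x1 + y12 * a21 + (b222 * x2 + y22 * a22)) * D - (a21*x1 + a22*x2) * (b112 * a22 + b222 * a11 - (b122 * a21 + b212 * a12))) / (D*D))
       - a12 * (((b211 * x1 + y11 * a21 + (b221 * x2 + y21 * a22)) * D - (a21*x1 + a22*x2) * (b111 * a22 + b221 * a11 - (b121 * a21 + b211 * a12))) / (D*D))) = Q / (D*D)" unfolding Q_def using D(2) by (simp add: field_simps)
  then show ?thesis using Q by simp
qed

lemma vec2_differentiable:
  fixes F :: "real^2 \<Rightarrow> real^2"
  assumes "\<And>i. (\<lambda>y. F y $ i) differentiable at x"
  shows "F differentiable at x"
proof -
  have "\<forall>i\<in>Basis. (\<lambda>y. F y \<bullet> i) differentiable at x"
    using assms by (auto simp: Basis_vec_def inner_axis)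
  then show ?thesis using differentiable_componentwise_within[of F x UNIV] by simp
qed

lemma Lambda2_box: "Lambda2 = box (-1) 1"
  by (auto simp: Lambda2_def interval_cart abs_less_iff)

lemma Lambda2_cbox: "Lambda2_closed = cbox (-1) 1"
  by (auto simp: Lambda2_closed_def interval_cart abs_le_iff)

lemma psi_pm1: "\<bar>x\<bar> = 1 \<Longrightarrow> psi_basis k x = 0"
  by (auto simp: psi_basis_def jacobiP_m1_def abs_if split: if_splits)

lemma phi_pm1: "\<bar>x\<bar> = 1 \<Longrightarrow> phi_basis k x = 0"
  by (auto simp: phi_basis_def jacobiP_m2_def abs_if split: if_splits)

lemma phi_cont: "continuous_on UNIV (phi_basis k)"
proof -
  obtain p where "\<forall>x. phi_basis k x = poly p x" using phi_poly by blast
  then have "phi_basis k = poly p" by auto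
  then show ?thesis by (auto intro: continuous_at_imp_continuous_on poly_isCont)
qed


lemma inv2:
  fixes a11 a12 a21 a22 w1 w2 d :: real
  assumes d: "d = a11*a22 - a12*a21" "d \<noteq> 0"
  shows "(a22*w1 - a12*w2)/d * a11 + (a11*w2 - a21*w1)/d * a12 = w1"
    and "(a22*w1 - a12*w2)/d * a21 + (a11*w2 - a21*w1)/d * a22 = w2"
proof -
  have "(a22*w1 - a12*w2)/d * a11 + (a11*w2 - a21*w1)/d * a12 = ((a22*w1 - a12*w2) * a11 + (a11*w2 - a21*w1) * a12)/d"
    by (simp add: add_divide_distrib)
  also have "\<dots> = (w1 * d) / d" by (simp add: d(1) algebra_simps)
  finally show "(a22*w1 - a12*w2)/d * a11 + (a11*w2 - a21*w1)/d * a12 = w1" using d(2) by simp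
  have "(a22*w1 - a12*w2)/d * a21 + (a11*w2 - a21*w1)/d * a22 = ((a22*w1 - a12*w2) * a21 + (a11*w2 - a21*w1) * a22)/d"
    by (simp add: add_divide_distrib)
  also have "\<dots> = (w2 * d) / d" by (simp add: d(1) algebra_simps)
  finally show "(a22*w1 - a12*w2)/d * a21 + (a11*w2 - a21*w1)/d * a22 = w2" using d(2) by simp
qed

theorem proposition2p3:
  fixes F :: "real^2 \<Rightarrow> real^2" and N :: nat and c :: "nat \<Rightarrow> nat \<Rightarrow> real"
  assumes "N \<ge> 4" and "diffeo_square F"
  defines "\<Omega> \<equiv> F ` Lambda2"
  defines "v \<equiv> (\<lambda>x. \<Sum>m=1..N-3. \<Sum>n=1..N-3. c m n *\<^sub>R piola_div F (chi m n) x)"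
  shows "(\<forall>x\<in>\<Omega>. v differentiable (at x) \<and> divergence v x = 0)
       \<and> continuous_on \<Omega> (\<lambda>x. matrix (frechet_derivative v (at x)))
       \<and> bounded ((\<lambda>x. matrix (frechet_derivative v (at x))) ` \<Omega>)
       \<and> continuous_on (closure \<Omega>) v
       \<and> (\<forall>x\<in>frontier \<Omega>. v x = 0)"
proof -
  define S where "S = cbox (-1::real^2) 1"
  define B where "B = box (-1::real^2) 1"
  obtain U where U: "open U" "S \<subseteq> U" "smooth_on U F"
    and inj: "inj_on F S" and detF: "\<And>\<xi>. \<xi> \<in> S \<Longrightarrow> det (matrix (fd F \<xi>)) \<noteq> 0"
    using assms(2) unfolding diffeo_square_def Lambda2_cbox S_def by blast
  have BS: "B \<subseteq> S" unfolding B_def S_def by (rule box_subset_cbox)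
  have openB: "open B" unfolding B_def by (rule open_box)
  have \<Omega>B: "\<Omega> = F ` B" unfolding \<Omega>_def B_def Lambda2_box ..
  define G where "G = inv_into S F"
  have GF: "\<And>\<xi>. \<xi> \<in> S \<Longrightarrow> G (F \<xi>) = \<xi>" unfolding G_def using inj by simp
  have sm: "\<And>k is x. x \<in> U \<Longrightarrow> iter_pdiff is (\<lambda>y. F y $ k) differentiable at x"
    using U(3) unfolding smooth_on_def by blast
  define a where "a i j = pdiff j (\<lambda>y. F y $ i)" for i j :: 2
  have dFc: "(\<lambda>y. F y $ k) differentiable at x" if "x \<in> U" for x k
    using sm[of x "[]" k] that by simp
  have da: "a i j differentiable at x" if "x \<in> U" for x i j
    using sm[of x "[j]" i] that by (simp add: a_def)
  have dda: "pdiff k (a i j) differentiable at x" if "x \<in> U" for x i j k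
    using sm[of x "[k,j]" i] that by (simp add: a_def)
  have dF: "F differentiable at x" if "x \<in> U" for x
    using vec2_differentiable dFc that by blast
  have fdF: "fd F x h $ i = h$1 * a i 1 x + h$2 * a i 2 x" if "x \<in> U" for x h i
    using fd_component(2)[OF dF[OF that]] fd_expand[OF dFc[OF that]] by (simp add: a_def)
  have jacE: "matrix (fd F x) $ i $ j = a i j x" if "x \<in> U" for x i j
    using fd_component(2)[OF dF[OF that]] by (simp add: matrix_def a_def pdiff_def)
  define dd where "dd \<xi> = a 1 1 \<xi> * a 2 2 \<xi> - a 1 2 \<xi> * a 2 1 \<xi>" for \<xi>
  have ddnz: "dd \<xi> \<noteq> 0" if "\<xi> \<in> S" for \<xi>
    using detF[OF that] jacE U(2) that by (auto simp: det_2 dd_def)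
  have symm: "pdiff 2 (a i 1) x = pdiff 1 (a i 2) x" if "x \<in> U" for x i
  proof -
    have "pdiff 2 (pdiff 1 (\<lambda>y. F y $ i)) x = pdiff 1 (pdiff 2 (\<lambda>y. F y $ i)) x"
    proof (rule clairaut[OF U(1) that])
      fix y assume "y \<in> U"
      then show "(\<lambda>y. F y $ i) differentiable at y \<and> pdiff 1 (\<lambda>y. F y $ i) differentiable at y
          \<and> pdiff 2 (\<lambda>y. F y $ i) differentiable at y"
        using dFc da unfolding a_def by blast
    next
      show "isCont (pdiff 2 (pdiff 1 (\<lambda>y. F y $ i))) x" "isCont (pdiff 1 (pdiff 2 (\<lambda>y. F y $ i))) x"
        using dda[OF that] differentiable_imp_continuous_within unfolding a_def by blast+
    qed
    then show ?thesis by (simp add: a_def)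
  qed
  define I where "I = {1..N-3}"
  have fI: "finite I" by (simp add: I_def)
  have "\<forall>k. \<exists>f'. (\<forall>x. (phi_basis k has_real_derivative f' x) (at x)) \<and> continuous_on UNIV f'"
    using phi_nice by blast
  then obtain Phi' where Phi': "\<And>k x. (phi_basis k has_real_derivative Phi' k x) (at x)"
      "\<And>k. continuous_on UNIV (Phi' k)" by metis
  have "\<forall>k. \<exists>f'. (\<forall>x. (psi_basis k has_real_derivative f' x) (at x)) \<and> continuous_on UNIV f'"
    using psi_nice by blast
  then obtain Psi' where Psi': "\<And>k x. (psi_basis k has_real_derivative Psi' k x) (at x)"
      "\<And>k. continuous_on UNIV (Psi' k)" by metis
  define X1 where "X1 = (\<lambda>\<xi>::real^2. \<Sum>m\<in>I. \<Sum>n\<in>I. c m n * (phi_basis (m+3) (\<xi>$1) * psi_basis (n+2) (\<xi>$2)))"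
  define X2 where "X2 = (\<lambda>\<xi>::real^2. \<Sum>m\<in>I. \<Sum>n\<in>I. (- c m n) * (psi_basis (m+2) (\<xi>$1) * phi_basis (n+3) (\<xi>$2)))"
  note s1 = sep_sum[OF fI fI, of "\<lambda>m. phi_basis (m+3)" "\<lambda>m. Phi' (m+3)" "\<lambda>n. psi_basis (n+2)" "\<lambda>n. Psi' (n+2)" c,
      OF Phi'(1) Psi'(1), folded X1_def]
  note s2 = sep_sum[OF fI fI, of "\<lambda>m. psi_basis (m+2)" "\<lambda>m. Psi' (m+2)" "\<lambda>n. phi_basis (n+3)" "\<lambda>n. Phi' (n+3)" "\<lambda>m n. - c m n",
      OF Psi'(1) Phi'(1), folded X2_def]
  have dX1: "X1 differentiable at \<xi>" for \<xi> using s1(1) .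
  have dX2: "X2 differentiable at \<xi>" for \<xi> using s2(1) .
  have PhiPsi: "Phi' (m+3) y = psi_basis (m+2) y" if "m \<in> I" for m y
    using DERIV_unique[OF Phi'(1) phi_deriv[of m y]] that by (simp add: I_def)
  have divX: "pdiff 1 X1 \<xi> + pdiff 2 X2 \<xi> = 0" for \<xi>
  proof -
    have "pdiff 1 X1 \<xi> = (\<Sum>m\<in>I. \<Sum>n\<in>I. c m n * (psi_basis (m+2) (\<xi>$1) * psi_basis (n+2) (\<xi>$2)))"
      using s1(2) PhiPsi by simp
    moreover have "pdiff 2 X2 \<xi> = (\<Sum>m\<in>I. \<Sum>n\<in>I. - (c m n * (psi_basis (m+2) (\<xi>$1) * psi_basis (n+2) (\<xi>$2))))"
      using s2(3) PhiPsi by simp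
    ultimately show ?thesis by (simp add: sum_negf)
  qed
  have cX1: "continuous_on T X1" for T unfolding X1_def
    by (rule sep_cont[OF phi_cont psi_cont])
  have cX2: "continuous_on T X2" for T unfolding X2_def
    by (rule sep_cont[OF psi_cont phi_cont])
  have cpX1: "continuous_on T (pdiff k X1)" if "k = 1 \<or> k = 2" for T k
  proof -
    have e1: "pdiff 1 X1 = (\<lambda>\<xi>. \<Sum>m\<in>I. \<Sum>n\<in>I. c m n * (Phi' (m+3) (\<xi>$1) * psi_basis (n+2) (\<xi>$2)))"
      using s1(2) by auto
    have e2: "pdiff 2 X1 = (\<lambda>\<xi>. \<Sum>m\<in>I. \<Sum>n\<in>I. c m n * (phi_basis (m+3) (\<xi>$1) * Psi' (n+2) (\<xi>$2)))"
      using s1(3) by auto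
    show ?thesis using that
      by (auto simp only: e1 e2 intro!: sep_cont Phi'(2) Psi'(2) phi_cont psi_cont)
  qed
  have cpX2: "continuous_on T (pdiff k X2)" if "k = 1 \<or> k = 2" for T k
  proof -
    have e1: "pdiff 1 X2 = (\<lambda>\<xi>. \<Sum>m\<in>I. \<Sum>n\<in>I. - c m n * (Psi' (m+2) (\<xi>$1) * phi_basis (n+3) (\<xi>$2)))"
      using s2(2) by auto
    have e2: "pdiff 2 X2 = (\<lambda>\<xi>. \<Sum>m\<in>I. \<Sum>n\<in>I. - c m n * (psi_basis (m+2) (\<xi>$1) * Phi' (n+3) (\<xi>$2)))"
      using s2(3) by auto
    show ?thesis using that
      by (auto simp only: e1 e2 intro!: sep_cont Phi'(2) Psi'(2) phi_cont psi_cont)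
  qed
  have SU: "\<xi> \<in> U" if "\<xi> \<in> S" for \<xi> using U(2) that by blast
  define NN where "NN i \<xi> = a i 1 \<xi> * X1 \<xi> + a i 2 \<xi> * X2 \<xi>" for i \<xi>
  define Hc where "Hc i \<xi> = NN i \<xi> / dd \<xi>" for i \<xi>
  define H where "H \<xi> = (\<chi> i. Hc i \<xi>)" for \<xi>
  define P where "P i k \<xi> = ((pdiff k (a i 1) \<xi> * X1 \<xi> + pdiff k X1 \<xi> * a i 1 \<xi>
        + (pdiff k (a i 2) \<xi> * X2 \<xi> + pdiff k X2 \<xi> * a i 2 \<xi>)) * dd \<xi>
      - NN i \<xi> * (pdiff k (a 1 1) \<xi> * a 2 2 \<xi> + pdiff k (a 2 2) \<xi> * a 1 1 \<xi>
        - (pdiff k (a 1 2) \<xi> * a 2 1 \<xi> + pdiff k (a 2 1) \<xi> * a 1 2 \<xi>))) / (dd \<xi> * dd \<xi>)" for i k \<xi>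
  have Hc_eq: "Hc i = (\<lambda>\<xi>. (a i 1 \<xi> * X1 \<xi> + a i 2 \<xi> * X2 \<xi>) / (a 1 1 \<xi> * a 2 2 \<xi> - a 1 2 \<xi> * a 2 1 \<xi>))" for i
    by (rule ext) (simp add: Hc_def NN_def dd_def)
  have dHc: "Hc i differentiable at \<xi>" if "\<xi> \<in> S" for i \<xi>
    unfolding Hc_eq using da[OF SU[OF that]] dX1 dX2 ddnz[OF that]
    by (intro differentiable_divide differentiable_add differentiable_diff differentiable_mult) (auto simp: dd_def)
  have Hcomp: "(\<lambda>y. H y $ i) = Hc i" for i by (rule ext) (simp add: H_def)
  have dH: "H differentiable at \<xi>" if "\<xi> \<in> S" for \<xi>
    by (rule vec2_differentiable) (simp add: Hcomp dHc[OF that])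
  have pHc: "pdiff k (Hc i) \<xi> = P i k \<xi>" if "\<xi> \<in> S" for i k \<xi>
  proof -
    define e :: "real^2" where "e = axis k 1"
    have la: "((\<lambda>t. a i' j (\<xi> + t *\<^sub>R e)) has_real_derivative pdiff k (a i' j) \<xi>) (at 0)" for i' j
      using line_deriv0[OF da[OF SU[OF that]], of i' j e] by (simp add: pdiff_def e_def)
    have lX1: "((\<lambda>t. X1 (\<xi> + t *\<^sub>R e)) has_real_derivative pdiff k X1 \<xi>) (at 0)"
      using line_deriv0[OF dX1, of \<xi> e] by (simp add: pdiff_def e_def)
    have lX2: "((\<lambda>t. X2 (\<xi> + t *\<^sub>R e)) has_real_derivative pdiff k X2 \<xi>) (at 0)"
      using line_deriv0[OF dX2, of \<xi> e] by (simp add: pdiff_def e_def)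
    have nz: "a 1 1 (\<xi> + 0 *\<^sub>R e) * a 2 2 (\<xi> + 0 *\<^sub>R e) - a 1 2 (\<xi> + 0 *\<^sub>R e) * a 2 1 (\<xi> + 0 *\<^sub>R e) \<noteq> 0"
      using ddnz[OF that] by (simp add: dd_def)
    have D: "((\<lambda>t. Hc i (\<xi> + t *\<^sub>R e)) has_real_derivative P i k \<xi>) (at 0)"
      using DERIV_divide[OF DERIV_add[OF DERIV_mult[OF la lX1] DERIV_mult[OF la lX2]]
                            DERIV_diff[OF DERIV_mult[OF la la] DERIV_mult[OF la la]] nz]
      unfolding Hc_eq by (simp add: P_def NN_def dd_def)
    show ?thesis
      using DERIV_unique[OF line_deriv0[OF dHc[OF that], of i e] D] by (simp add: pdiff_def e_def)
  qed
  have fdH: "fd H \<xi> h $ i = h$1 * P i 1 \<xi> + h$2 * P i 2 \<xi>" if "\<xi> \<in> S" for \<xi> h i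
    using fd_component(2)[OF dH[OF that], of h i] fd_expand[OF dHc[OF that], of i h] pHc[OF that]
    by (simp add: Hcomp)
  have vH: "v (F \<xi>) = H \<xi>" if "\<xi> \<in> S" for \<xi>
  proof -
    have G1: "inv_into Lambda2_closed F (F \<xi>) = \<xi>" using GF[OF that] by (simp add: G_def Lambda2_cbox S_def)
    have dt: "det (matrix (fd F \<xi>)) = dd \<xi>" using jacE[OF SU[OF that]] by (simp add: det_2 dd_def)
    have pd: "piola_div F (chi m n) (F \<xi>) $ i = (a i 1 \<xi> * (phi_basis (m + 3) (\<xi> $ 1) * psi_basis (n + 2) (\<xi> $ 2))
         + a i 2 \<xi> * (- psi_basis (m + 2) (\<xi> $ 1) * phi_basis (n + 3) (\<xi> $ 2))) / dd \<xi>" for m n i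
      using jacE[OF SU[OF that]]
      by (simp add: piola_div_def G1 dt matrix_vector_mult_def sum_2 chi_def jac_def)
    have "v (F \<xi>) $ i = Hc i \<xi>" for i
    proof -
      have "v (F \<xi>) $ i = (\<Sum>m\<in>I. \<Sum>n\<in>I. c m n * ((a i 1 \<xi> * (phi_basis (m + 3) (\<xi> $ 1) * psi_basis (n + 2) (\<xi> $ 2))
         + a i 2 \<xi> * (- psi_basis (m + 2) (\<xi> $ 1) * phi_basis (n + 3) (\<xi> $ 2))) / dd \<xi>))"
        by (simp add: v_def I_def pd)
      also have "\<dots> = (\<Sum>m\<in>I. \<Sum>n\<in>I. (a i 1 \<xi> * (c m n * (phi_basis (m+3) (\<xi>$1) * psi_basis (n+2) (\<xi>$2)))
          + a i 2 \<xi> * ((- c m n) * (psi_basis (m+2) (\<xi>$1) * phi_basis (n+3) (\<xi>$2)))) / dd \<xi>)"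
        by (intro sum.cong refl) (simp add: algebra_simps)
      also have "\<dots> = (\<Sum>m\<in>I. \<Sum>n\<in>I. (a i 1 \<xi> * (c m n * (phi_basis (m+3) (\<xi>$1) * psi_basis (n+2) (\<xi>$2)))
          + a i 2 \<xi> * ((- c m n) * (psi_basis (m+2) (\<xi>$1) * phi_basis (n+3) (\<xi>$2))))) / dd \<xi>"
        by (simp only: sum_divide_distrib)
      also have "\<dots> = Hc i \<xi>"
        unfolding Hc_def NN_def X1_def X2_def by (simp only: sum_distrib_left sum.distrib)

      finally show ?thesis .
    qed
    then show ?thesis by (simp add: vec_eq_iff H_def)
  qed
  define gi where "gi \<xi> (w::real^2) = (vector [(a 2 2 \<xi> * w$1 - a 1 2 \<xi> * w$2) / dd \<xi>, (a 1 1 \<xi> * w$2 - a 2 1 \<xi> * w$1) / dd \<xi>] :: real^2)" for \<xi> w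
  have contF: "continuous_on S F"
    using dF SU by (intro continuous_at_imp_continuous_on ballI differentiable_imp_continuous_within) auto
  have dG: "(G has_derivative gi \<xi>) (at (F \<xi>))" if "\<xi> \<in> B" for \<xi>
  proof (rule has_derivative_inverse_strong[OF openB that])
    show "continuous_on B F" using contF BS continuous_on_subset by blast
    show "\<And>x. x \<in> B \<Longrightarrow> G (F x) = x" using GF BS by blast
    show "(F has_derivative fd F \<xi>) (at \<xi>)" using dF[OF SU] BS that frechet_derivative_works by blast
    have "\<xi> \<in> S" using BS that by blast
    then have \<xi>U: "\<xi> \<in> U" by (rule SU)
    show "fd F \<xi> \<circ> gi \<xi> = id"
    proof (rule ext)
      fix w :: "real^2"
      note I2 = inv2[OF dd_def ddnz[OF \<open>\<xi> \<in> S\<close>], of "w$1" "w$2"]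
      have "fd F \<xi> (gi \<xi> w) $ i = w $ i" for i
        using fdF[OF \<xi>U, of "gi \<xi> w" i] I2 exhaust_2[of i]
        by (auto simp: gi_def mult.commute)
      then show "(fd F \<xi> \<circ> gi \<xi>) w = id w" by (simp add: vec_eq_iff)
    qed
  qed
  have open\<Omega>: "open \<Omega>" unfolding \<Omega>B
    using invariance_of_domain[OF _ openB, of F] contF BS inj continuous_on_subset inj_on_subset by blast
  have dv: "(v has_derivative (\<lambda>w. fd H \<xi> (gi \<xi> w))) (at (F \<xi>))" if "\<xi> \<in> B" for \<xi>
  proof -
    have \<xi>S: "\<xi> \<in> S" using BS that by blast
    have "(H has_derivative fd H \<xi>) (at (G (F \<xi>)))"
      using frechet_derivative_works[THEN iffD1, OF dH[OF \<xi>S]] GF[OF \<xi>S] by simp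
    from has_derivative_compose[OF dG[OF that] this]
    have HG: "((\<lambda>x. H (G x)) has_derivative (\<lambda>w. fd H \<xi> (gi \<xi> w))) (at (F \<xi>))" .
    show ?thesis
    proof (rule has_derivative_transform_within_open[OF HG open\<Omega>])
      show "F \<xi> \<in> \<Omega>" using that \<Omega>B by blast
      fix x assume "x \<in> \<Omega>"
      then obtain \<eta> where "\<eta> \<in> B" "x = F \<eta>" using \<Omega>B by blast
      then show "H (G x) = v x" using vH GF BS by auto
    qed
  qed
  have fdv: "fd v (F \<xi>) = (\<lambda>w. fd H \<xi> (gi \<xi> w))" if "\<xi> \<in> B" for \<xi>
    using frechet_derivative_at[OF dv[OF that]] by simp
  have contA: "continuous_on S (a i j)" for i j
    using da SU by (intro continuous_at_imp_continuous_on ballI differentiable_imp_continuous_within) auto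
  have contDA: "continuous_on S (pdiff k (a i j))" for i j k
    using dda SU by (intro continuous_at_imp_continuous_on ballI differentiable_imp_continuous_within) auto
  have contDD: "continuous_on S dd" unfolding dd_def[abs_def] by (intro continuous_intros contA)
  have contP: "continuous_on S (P i k)" if "k = 1 \<or> k = 2" for i k
    unfolding P_def[abs_def] NN_def
    by (intro continuous_intros contA contDA cX1 cX2 cpX1[OF that] cpX2[OF that] contDD) (auto simp: ddnz)
  have cg1: "continuous_on S (\<lambda>\<xi>. gi \<xi> w $ 1)" for w
    unfolding gi_def vector_2 by (intro continuous_intros contA contDD) (auto simp: ddnz)
  have cg2: "continuous_on S (\<lambda>\<xi>. gi \<xi> w $ 2)" for w
    unfolding gi_def vector_2 by (intro continuous_intros contA contDD) (auto simp: ddnz)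
  define M where "M \<xi> = (\<chi> i j. gi \<xi> (axis j 1) $ 1 * P i 1 \<xi> + gi \<xi> (axis j 1) $ 2 * P i 2 \<xi>)" for \<xi>
  have contM: "continuous_on S M"
    unfolding M_def[abs_def]
    by (intro continuous_on_vec_lambda continuous_intros cg1 cg2 contP) auto
  have matM: "matrix (fd v (F \<xi>)) = M \<xi>" if "\<xi> \<in> B" for \<xi>
    using fdH[of \<xi>] BS that by (auto simp: matrix_def fdv[OF that] M_def)
  have contG: "continuous_on (F ` S) G"
    using continuous_on_inv[OF contF _ ] GF unfolding S_def by auto
  have GS: "G ` (F ` S) \<subseteq> S" using GF by auto
  have \<Omega>S: "\<Omega> \<subseteq> F ` S" using \<Omega>B BS by auto
  have contH: "continuous_on S H"
    using dH by (intro continuous_at_imp_continuous_on ballI differentiable_imp_continuous_within) auto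
  have P1: "\<forall>x\<in>\<Omega>. v differentiable (at x) \<and> divergence v x = 0"
  proof
    fix x assume "x \<in> \<Omega>"
    then obtain \<xi> where \<xi>B: "\<xi> \<in> B" and x: "x = F \<xi>" using \<Omega>B by blast
    have \<xi>S: "\<xi> \<in> S" using \<xi>B BS by blast
    have \<xi>U: "\<xi> \<in> U" using SU[OF \<xi>S] .
    have ax: "axis 1 1 $ (2::2) = (0::real)" "axis 2 1 $ (1::2) = (0::real)" by (simp_all add: axis_def)
    have dv2: "pdiff 2 X2 \<xi> + pdiff 1 X1 \<xi> = 0" using divX[of \<xi>] by linarith
    have alg: "a 2 2 \<xi> * P 1 1 \<xi> - a 2 1 \<xi> * P 1 2 \<xi> + (a 1 1 \<xi> * P 2 2 \<xi> - a 1 2 \<xi> * P 2 1 \<xi>) = 0"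
      unfolding P_def NN_def
      by (rule piola_alg) (simp_all add: dd_def[symmetric] ddnz[OF \<xi>S] symm[OF \<xi>U] eq_neg_iff_add_eq_0 divX dv2)
    have "divergence v x = (a 2 2 \<xi> * P 1 1 \<xi> - a 2 1 \<xi> * P 1 2 \<xi> + (a 1 1 \<xi> * P 2 2 \<xi> - a 1 2 \<xi> * P 2 1 \<xi>)) / dd \<xi>"
      using ddnz[OF \<xi>S] fdH[OF \<xi>S] ax
      by (simp add: x divergence_def sum_2 fdv[OF \<xi>B] gi_def field_simps)
    then have "divergence v x = 0" using alg by simp
    moreover have "v differentiable (at x)" using dv[OF \<xi>B] x unfolding differentiable_def by blast
    ultimately show "v differentiable (at x) \<and> divergence v x = 0" by blast
  qed
  have MG: "matrix (fd v x) = M (G x)" if x\<Omega>: "x \<in> \<Omega>" for x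
  proof -
    obtain \<xi> where \<xi>B: "\<xi> \<in> B" and x: "x = F \<xi>" using \<Omega>B x\<Omega> by blast
    then show ?thesis using matM GF BS by auto
  qed
  have P2: "continuous_on \<Omega> (\<lambda>x. matrix (fd v x))"
  proof (rule continuous_on_eq)
    show "continuous_on \<Omega> (\<lambda>x. M (G x))"
      by (rule continuous_on_compose2[OF contM continuous_on_subset[OF contG \<Omega>S]]) (use GS \<Omega>S in blast)
    show "\<And>x. x \<in> \<Omega> \<Longrightarrow> M (G x) = matrix (fd v x)" using MG by simp
  qed
  have P3: "bounded ((\<lambda>x. matrix (fd v x)) ` \<Omega>)"
  proof (rule bounded_subset)
    show "bounded (M ` S)"
      using compact_imp_bounded[OF compact_continuous_image[OF contM]] by (simp add: S_def)
    show "(\<lambda>x. matrix (fd v x)) ` \<Omega> \<subseteq> M ` S"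
    proof (rule image_subsetI)
      fix x assume x\<Omega>: "x \<in> \<Omega>"
      then have "G x \<in> S" using GS \<Omega>S by blast
      then show "matrix (fd v x) \<in> M ` S" unfolding MG[OF x\<Omega>] by (rule imageI)
    qed
  qed
  have clos: "closure \<Omega> = F ` S"
  proof
    have "closed (F ` S)"
      using compact_imp_closed[OF compact_continuous_image[OF contF]] by (simp add: S_def)
    then show "closure \<Omega> \<subseteq> F ` S" using closure_minimal[OF \<Omega>S] by blast
    have cB: "closure B = S" unfolding B_def S_def by (rule closure_box) (simp add: box_ne_empty Basis_vec_def inner_axis)
    have "F ` closure B \<subseteq> closure \<Omega>"
    proof (rule image_closure_subset)
      show "continuous_on (closure B) F" using contF cB by simp
      show "closed (closure \<Omega>)" by simp
      show "F ` B \<subseteq> closure \<Omega>" unfolding \<Omega>B by (rule closure_subset)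
    qed
    then show "F ` S \<subseteq> closure \<Omega>" using cB by simp
  qed
  have P4: "continuous_on (closure \<Omega>) v"
    unfolding clos
  proof (rule continuous_on_eq)
    show "continuous_on (F ` S) (\<lambda>x. H (G x))"
      by (rule continuous_on_compose2[OF contH contG GS])
    show "\<And>x. x \<in> F ` S \<Longrightarrow> H (G x) = v x" using vH GF by auto
  qed
  have P5: "\<forall>x\<in>frontier \<Omega>. v x = 0"
  proof
    fix x assume "x \<in> frontier \<Omega>"
    then have "x \<in> F ` S" "x \<notin> \<Omega>" unfolding frontier_def clos interior_open[OF open\<Omega>] by auto
    then obtain \<xi> where \<xi>S: "\<xi> \<in> S" and x: "x = F \<xi>" and \<xi>B: "\<xi> \<notin> B" using \<Omega>B by blast
    have "\<bar>\<xi>$1\<bar> = 1 \<or> \<bar>\<xi>$2\<bar> = 1"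
      using \<xi>S \<xi>B unfolding S_def B_def mem_box_cart forall_2 by auto
    then have "X1 \<xi> = 0 \<and> X2 \<xi> = 0"
      by (auto simp: X1_def X2_def psi_pm1 phi_pm1)
    then have "H \<xi> = 0" by (simp add: H_def Hc_def NN_def vec_eq_iff)
    then show "v x = 0" using vH[OF \<xi>S] x by simp
  qed
  show ?thesis using P1 P2 P3 P4 P5 by blast
qed

end
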